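(* Let $X \subseteq \mathbb{Z}^2$ be finite, full-dimensional and lattice-convex. Then $H(X) \le \mathrm{rc}(X) \le H(X) + 1$.
   Context: $X$ is lattice-convex if $\mathrm{conv}(X)\cap\mathbb{Z}^2 = X$. $\mathrm{rc}(X)$ is the smallest number of facets of a polyhedron $P$ with $P\cap\mathbb{Z}^2 = X$. A hiding set for $X$ is a set $H \subseteq (\mathrm{aff}(X)\cap\mathbb{Z}^2)\setminus X$ such that $\mathrm{conv}(\{x,y\})\cap\mathrm{conv}(X)\ne\emptyset$ for all distinct $x,y\in H$; $H(X)$ is the maximum cardinality of a hiding set for $X$. *)

theory Defs
  imports "HOL-Analysis.Analysis" "HOL-Library.Extended_Nat"
begin

definition lattice2 :: "(real^2) set" where
  "lattice2 = {x. \<forall>i. x $ i \<in> \<int>}"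

definition lattice_convex :: "(real^2) set \<Rightarrow> bool" where
  "lattice_convex X \<longleftrightarrow> convex hull X \<inter> lattice2 = X"

definition rc :: "(real^2) set \<Rightarrow> nat" where
  "rc X = (LEAST k. \<exists>P. polyhedron P \<and> P \<inter> lattice2 = X \<and> card {F. F facet_of P} = k)"

definition hiding_set :: "(real^2) set \<Rightarrow> (real^2) set \<Rightarrow> bool" where
  "hiding_set X H \<longleftrightarrow> H \<subseteq> (affine hull X \<inter> lattice2) - X \<and>
     (\<forall>x\<in>H. \<forall>y\<in>H. x \<noteq> y \<longrightarrow> closed_segment x y \<inter> convex hull X \<noteq> {})"

definition hiding_number :: "(real^2) set \<Rightarrow> enat" where
  "hiding_number X = (SUP H\<in>{H. hiding_set X H}. if finite H then enat (card H) else \<infinity>)"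

end

theory Submission
  imports Defs
begin

lemma inner2: "inner (x::real^2) y = x$1*y$1 + x$2*y$2"
  by (simp add: inner_vec_def sum_2)

lemma lattice2_iff: "x \<in> lattice2 \<longleftrightarrow> x$1 \<in> \<int> \<and> x$2 \<in> \<int>"
  by (simp add: lattice2_def forall_2)

lemma open_bdd_Inf_Sup:
  fixes S :: "real set"
  assumes "open S" "bounded S" "x \<in> S"
  shows "Inf S < x \<and> x < Sup S"
proof -
  obtain e where e: "e > 0" "ball x e \<subseteq> S" using assms open_contains_ball by blast
  have "x - e/2 \<in> S" "x + e/2 \<in> S" using e by (auto simp: dist_real_def subset_iff)
  moreover have "bdd_below S" "bdd_above S" using assms bounded_imp_bdd_below bounded_imp_bdd_above by auto
  ultimately have "Inf S \<le> x - e/2" "x + e/2 \<le> Sup S" using cInf_lower cSup_upper by blast+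
  then show ?thesis using e by linarith
qed

lemma interval_mem:
  fixes S :: "real set"
  assumes "is_interval S" "bounded S" "S \<noteq> {}" "Inf S < p" "p < Sup S"
  shows "p \<in> S"
proof -
  have "bdd_below S" "bdd_above S" using assms bounded_imp_bdd_below bounded_imp_bdd_above by auto
  then obtain x y where "x \<in> S" "x < p" "y \<in> S" "p < y"
    using assms cInf_less_iff less_cSup_iff by metis
  then show ?thesis using assms(1) unfolding is_interval_1 by (meson less_imp_le)
qed

lemma greedy:
  assumes "finite FF" "\<forall>S\<in>FF. open S \<and> is_interval S \<and> bounded S \<and> S \<noteq> ({}::real set)"
  shows "\<exists>Th D. finite Th \<and> D \<subseteq> FF \<and> (\<forall>A\<in>D. \<forall>B\<in>D. A \<noteq> B \<longrightarrow> A \<inter> B = {})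
     \<and> card Th \<le> card D \<and> (\<forall>S\<in>FF. S \<inter> Th \<noteq> {})"
  using assms
proof (induction "card FF" arbitrary: FF rule: less_induct)
  case less
  show ?case
  proof (cases "FF = {}")
    case True
    then show ?thesis by (rule_tac x="{}" in exI, rule_tac x="{}" in exI) auto
  next
    case False
    define r where "r = Min (Sup ` FF)"
    have "r \<in> Sup ` FF" unfolding r_def using False less.prems by auto
    then obtain S0 where S0: "S0 \<in> FF" "Sup S0 = r" by auto
    have rle: "r \<le> Sup S" if "S \<in> FF" for S unfolding r_def using less.prems that by auto
    define M where "M = {S\<in>FF. Inf S < r}"
    have S0M: "S0 \<in> M"
    proof -
      obtain x where "x \<in> S0" using S0 less.prems by blast
      then show ?thesis using open_bdd_Inf_Sup[of S0 x] S0 less.prems unfolding M_def by force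
    qed
    have finM: "finite M" using less.prems unfolding M_def by auto
    define m where "m = Max (Inf ` M)"
    have mlt: "m < r"
    proof -
      have "m \<in> Inf ` M" unfolding m_def using finM S0M by (intro Max_in) auto
      then show ?thesis unfolding M_def by auto
    qed
    have mge: "Inf S \<le> m" if "S \<in> M" for S unfolding m_def using finM that by auto
    define p where "p = (m + r) / 2"
    have pin: "p \<in> S" if "S \<in> M" for S
    proof -
      have "S \<in> FF" "Inf S < p" "p < Sup S" using that mge[OF that] mlt rle[of S] unfolding M_def p_def by auto
      then show ?thesis using interval_mem less.prems by blast
    qed
    define R where "R = FF - M"
    have RFF: "R \<subseteq> FF" unfolding R_def by auto
    have "R \<subset> FF" using RFF S0M S0 unfolding R_def by blast
    then have "card R < card FF" using less.prems(1) by (rule psubset_card_mono[rotated])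
    moreover have "finite R" using RFF less.prems(1) finite_subset by blast
    moreover have "\<forall>S\<in>R. open S \<and> is_interval S \<and> bounded S \<and> S \<noteq> {}" using RFF less.prems(2) by blast
    ultimately have "\<exists>Th D. finite Th \<and> D \<subseteq> R \<and> (\<forall>A\<in>D. \<forall>B\<in>D. A \<noteq> B \<longrightarrow> A \<inter> B = {})
     \<and> card Th \<le> card D \<and> (\<forall>S\<in>R. S \<inter> Th \<noteq> {})" by (rule less.hyps)
    then obtain Th D where IH: "finite Th" "D \<subseteq> R" "\<forall>A\<in>D. \<forall>B\<in>D. A \<noteq> B \<longrightarrow> A \<inter> B = {}"
       "card Th \<le> card D" "\<forall>S\<in>R. S \<inter> Th \<noteq> {}" by auto
    have disj: "S0 \<inter> S = {}" if "S \<in> R" for S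
    proof (rule ccontr)
      assume "S0 \<inter> S \<noteq> {}"
      then obtain x where x: "x \<in> S0" "x \<in> S" by auto
      have "S \<in> FF" "\<not> Inf S < r" using that unfolding R_def M_def by auto
      have "x < Sup S0" using open_bdd_Inf_Sup[of S0 x] x S0 less.prems(2) by blast
      moreover have "Inf S < x" using open_bdd_Inf_Sup[of S x] x \<open>S \<in> FF\<close> less.prems(2) by blast
      ultimately show False using S0(2) \<open>\<not> Inf S < r\<close> by linarith
    qed
    have S0D: "S0 \<notin> D" using IH(2) S0M unfolding R_def by auto
    have finD: "finite D" by (rule finite_subset[OF subset_trans[OF IH(2) RFF] less.prems(1)])
    show ?thesis
    proof (rule exI[of _ "insert p Th"], rule exI[of _ "insert S0 D"], intro conjI)
      show "finite (insert p Th)" using IH(1) by simp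
      show "insert S0 D \<subseteq> FF" using IH(2) RFF S0(1) by blast
      show "\<forall>A\<in>insert S0 D. \<forall>B\<in>insert S0 D. A \<noteq> B \<longrightarrow> A \<inter> B = {}"
      proof (intro ballI impI)
        fix A B assume A: "A \<in> insert S0 D" and B: "B \<in> insert S0 D" and AB: "A \<noteq> B"
        show "A \<inter> B = {}"
        proof (cases "A = S0")
          case True
          then have "B \<in> R" using B AB IH(2) by auto
          then show ?thesis using disj True by simp
        next
          case False
          note AF = this
          show ?thesis
          proof (cases "B = S0")
            case True
            then have "A \<in> R" using A AF IH(2) by auto
            then show ?thesis using disj True by blast
          next
            case False
            then show ?thesis using A B AF AB IH(3) by simp
          qed
        qed
      qed
      show "card (insert p Th) \<le> card (insert S0 D)"
        using IH(1,4) S0D finD by (simp add: card_insert_if)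
      show "\<forall>S\<in>FF. S \<inter> insert p Th \<noteq> {}"
      proof
        fix S assume "S \<in> FF"
        show "S \<inter> insert p Th \<noteq> {}"
        proof (cases "S \<in> M")
          case True then show ?thesis using pin by blast
        next
          case False then have "S \<in> R" using \<open>S \<in> FF\<close> by (simp add: R_def)
          then show ?thesis using IH(5) by blast
        qed
      qed
    qed
  qed
qed

definition fd :: "real \<Rightarrow> real^2 \<Rightarrow> real" where
  "fd t v = cos t * v$1 + sin t * v$2"

lemma fd_linear: "fd t (x - y) = fd t x - fd t y" "fd t (x + y) = fd t x + fd t y"
  "fd t (c *\<^sub>R x) = c * fd t x"
  by (simp_all add: fd_def algebra_simps)

lemma trig_comb: "sin (b - a) * fd t v = sin (b - t) * fd a v + sin (t - a) * fd b v"
  by (simp add: fd_def sin_diff algebra_simps)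

lemma pos_comb:
  assumes "a < t" "t < b" "b - a < pi" "fd a v > 0" "fd b v > 0"
  shows "fd t v > 0"
proof -
  have "sin (b - a) > 0" "sin (b - t) > 0" "sin (t - a) > 0" using assms by (auto intro!: sin_gt_zero)
  then have "sin (b - a) * fd t v > 0" using assms trig_comb by (metis add_pos_pos mult_pos_pos)
  then show ?thesis using \<open>sin (b - a) > 0\<close> by (simp add: zero_less_mult_iff)
qed

lemma fd_pi: "fd (a + pi) v = - fd a v" by (simp add: fd_def)
lemma fd_2pi: "fd (a + 2*pi) v = fd a v" by (simp add: fd_def)

definition GG :: "(real^2) set \<Rightarrow> real^2 \<Rightarrow> real \<Rightarrow> bool" where
  "GG X z t \<longleftrightarrow> (\<forall>x\<in>X. 0 < fd t (z - x))"

definition Sz :: "(real^2) set \<Rightarrow> real^2 \<Rightarrow> real set" where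
  "Sz X z = {t. 0 < t \<and> t < 2*pi \<and> GG X z t}"

lemma Sz_interval:
  assumes "X \<noteq> {}" "\<not> GG X z 0"
  shows "is_interval (Sz X z)"
  unfolding is_interval_1
proof (intro ballI allI impI)
  fix a b x assume a: "a \<in> Sz X z" and b: "b \<in> Sz X z" and x: "a \<le> x \<and> x \<le> b"
  show "x \<in> Sz X z"
  proof (cases "x = a \<or> x = b")
    case True then show ?thesis using a b by auto
  next
    case False
    then have ax: "a < x" "x < b" using x by auto
    have a0: "0 < a" "a < 2*pi" "GG X z a" and b0: "0 < b" "b < 2*pi" "GG X z b" using a b by (auto simp: Sz_def)
    consider "b - a < pi" | "b - a = pi" | "b - a > pi" by linarith
    then show ?thesis
    proof cases
      case 1
      then have "GG X z x" using a0 b0 ax pos_comb unfolding GG_def by blast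
      then show ?thesis using a0 b0 ax by (simp add: Sz_def)
    next
      case 2
      obtain y where "y \<in> X" using assms by auto
      then have "0 < fd a (z - y)" "0 < fd b (z - y)" using a0 b0 by (auto simp: GG_def)
      moreover have "fd b (z - y) = - fd a (z - y)" using 2 fd_pi[of a] by (metis add.commute diff_add_cancel)
      ultimately show ?thesis by linarith
    next
      case 3
      have "GG X z (2*pi)"
        unfolding GG_def
      proof
        fix y assume "y \<in> X"
        then have "0 < fd b (z - y)" "0 < fd (a + 2*pi) (z - y)" using a0 b0 fd_2pi by (auto simp: GG_def)
        then show "0 < fd (2*pi) (z - y)" using pos_comb[of b "2*pi" "a + 2*pi"] a0 b0 3 by auto
      qed
      then have "GG X z 0" by (simp add: GG_def fd_def)
      then show ?thesis using assms by auto
    qed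
  qed
qed

lemma Sz_open:
  assumes "finite X"
  shows "open (Sz X z)"
proof -
  have eq: "Sz X z = {t. 0 < t} \<inter> {t. t < 2*pi} \<inter> (\<Inter>x\<in>X. {t. 0 < fd t (z - x)})"
    by (auto simp: Sz_def GG_def)
  have "open {t. 0 < fd t (z - x)}" for x
    unfolding fd_def by (intro open_Collect_less continuous_intros)
  then show ?thesis unfolding eq using assms
    by (intro open_Int open_INT) (auto intro: open_Collect_less continuous_intros)
qed

lemma Sz_bounded: "bounded (Sz X z)"
proof -
  have "Sz X z \<subseteq> cball 0 (2*pi)" by (auto simp: Sz_def dist_real_def)
  then show ?thesis using bounded_cball bounded_subset by blast
qed

lemma dir_exists:
  fixes a :: "real^2"
  assumes "a \<noteq> 0"
  obtains t where "0 \<le> t" "t < 2*pi" "\<And>v. fd t v = inner a v / norm a"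
proof -
  have n: "norm a > 0" using assms by auto
  have eq: "(norm a)^2 = (a$1)^2 + (a$2)^2"
    unfolding power2_norm_eq_inner inner2 by (simp add: power2_eq_square)
  have "(a$1 / norm a)^2 + (a$2 / norm a)^2 = ((a$1)^2 + (a$2)^2) / (norm a)^2"
    by (simp add: power_divide add_divide_distrib)
  also have "\<dots> = 1" using n by (simp add: eq[symmetric])
  finally have "(a$1 / norm a)^2 + (a$2 / norm a)^2 = 1" .
  then obtain t where t: "0 \<le> t" "t < 2*pi" "a$1 / norm a = cos t" "a$2 / norm a = sin t"
    using sincos_total_2pi by metis
  show ?thesis
    by (rule that[OF t(1,2)]) (simp add: fd_def inner2 t(3,4)[symmetric] add_divide_distrib)
qed

lemma interior_strict:
  fixes S :: "'a::euclidean_space set"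
  assumes "p \<in> interior S" "S \<subseteq> {x. inner a x \<le> b}" "a \<noteq> 0"
  shows "inner a p < b"
proof -
  obtain e where e: "e > 0" "ball p e \<subseteq> S" using assms(1) mem_interior by blast
  define q where "q = p + (e / 2 / norm a) *\<^sub>R a"
  have "dist p q < e" using e assms(3) by (simp add: q_def dist_norm)
  then have "q \<in> S" using e by auto
  then have "inner a q \<le> b" using assms(2) by auto
  moreover have "inner a q = inner a p + e / 2 * norm a"
    using assms(3) by (simp add: q_def inner_add_right power2_norm_eq_inner[symmetric] power2_eq_square)
  moreover have "e / 2 * norm a > 0" using e assms(3) by simp
  ultimately show ?thesis by linarith
qed

lemma exit_facet:
  fixes S :: "'a::euclidean_space set"
  assumes "polyhedron S" "p \<in> interior S" "z \<notin> S"
  obtains C a b t where "C facet_of S" "a \<noteq> 0" "S \<subseteq> {x. inner a x \<le> b}" "C = S \<inter> {x. inner a x = b}"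
    "0 < t" "t \<le> 1" "p + t *\<^sub>R (z - p) \<in> C" "inner a z > b" "inner a p < b"
proof -
  have pS: "p \<in> S" using assms(2) interior_subset by blast
  have "closed_segment p z \<inter> frontier S \<noteq> {}"
    by (rule connected_Int_frontier) (use pS assms(3) in auto)
  then obtain y where y: "y \<in> closed_segment p z" "y \<in> frontier S" by auto
  have clS: "closed S" using assms(1) polyhedron_imp_closed by blast
  have "interior S = rel_interior S" using assms(2) rel_interior_nonempty_interior by blast
  then have "y \<in> S - rel_interior S" using y(2) clS by (simp add: frontier_def closure_closed)
  then obtain C where C: "C facet_of S" "y \<in> C" using rel_boundary_of_polyhedron[OF assms(1)] by blast
  obtain a b where ab: "a \<noteq> 0" "S \<subseteq> {x. inner a x \<le> b}" "C = S \<inter> {x. inner a x = b}"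
    using facet_of_polyhedron[OF assms(1) C(1)] by blast
  have ap: "inner a p < b" by (rule interior_strict[OF assms(2) ab(2) ab(1)])
  obtain u where u: "0 \<le> u" "u \<le> 1" "y = (1 - u) *\<^sub>R p + u *\<^sub>R z"
    using y(1) unfolding closed_segment_def by blast
  have yb: "inner a y = b" using C(2) ab(3) by auto
  have yeq: "inner a y = (1 - u) * inner a p + u * inner a z" using u(3) by (simp add: inner_add_right)
  have u0: "u \<noteq> 0"
  proof
    assume "u = 0"
    then have "inner a y = inner a p" using yeq by simp
    then show False using yb ap by simp
  qed
  have u1: "u \<noteq> 1"
  proof
    assume "u = 1"
    then have "y = z" using u(3) by simp
    then show False using C(2) ab(3) assms(3) by blast
  qed
  have "(1 - u) * inner a p < (1 - u) * b" using ap u u1 by (simp add: mult_strict_left_mono)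
  then have "u * inner a z > u * b" using yb yeq by (simp add: algebra_simps)
  then have az: "inner a z > b" using u u0 by (simp add: mult_less_cancel_left)
  have "p + u *\<^sub>R (z - p) = y" using u(3) by (simp add: algebra_simps)
  then have "p + u *\<^sub>R (z - p) \<in> C" using C(2) by simp
  moreover have "0 < u" using u(1) u0 by simp
  ultimately show ?thesis using that[OF C(1) ab _ u(2)] az ap by blast
qed

lemma cross_zero:
  fixes a a' v :: "real^2"
  assumes "inner a v = 0" "inner a' v = 0" "v \<noteq> 0" "a \<noteq> 0"
  shows "\<exists>\<mu>. a' = \<mu> *\<^sub>R a"
proof -
  have e1: "a$1 * v$1 + a$2 * v$2 = 0" "a'$1 * v$1 + a'$2 * v$2 = 0" using assms inner2 by auto
  have "(a$1 * a'$2 - a$2 * a'$1) * v$1 = 0" "(a$1 * a'$2 - a$2 * a'$1) * v$2 = 0"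
    using e1 by algebra+
  moreover have "v$1 \<noteq> 0 \<or> v$2 \<noteq> 0" using assms(3) by (simp add: vec_eq_iff forall_2)
  ultimately have "a$1 * a'$2 - a$2 * a'$1 = 0" by (metis mult_eq_0_iff)
  then have det: "a$1 * a'$2 = a$2 * a'$1" by simp
  have "a$1 \<noteq> 0 \<or> a$2 \<noteq> 0" using assms(4) by (simp add: vec_eq_iff forall_2)
  then show ?thesis
  proof
    assume h: "a$1 \<noteq> 0"
    have "a'$1 = a'$1 / a$1 * a$1" "a'$2 = a'$1 / a$1 * a$2" using h det by (simp_all add: field_simps)
    then have "a' = (a'$1 / a$1) *\<^sub>R a" unfolding vec_eq_iff forall_2 by simp
    then show ?thesis by blast
  next
    assume h: "a$2 \<noteq> 0"
    have "a'$1 = a'$2 / a$2 * a$1" "a'$2 = a'$2 / a$2 * a$2" using h det by (simp_all add: field_simps)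
    then have "a' = (a'$2 / a$2) *\<^sub>R a" unfolding vec_eq_iff forall_2 by simp
    then show ?thesis by blast
  qed
qed

lemma facet_two_points:
  fixes S :: "(real^2) set"
  assumes "C facet_of S" "aff_dim S = 2"
  obtains y1 y2 where "y1 \<in> C" "y2 \<in> C" "y1 \<noteq> y2"
proof -
  have ne: "C \<noteq> {}" and ad: "aff_dim C = 1" using assms unfolding facet_of_def by auto
  obtain y1 where y1: "y1 \<in> C" using ne by blast
  show ?thesis
  proof (cases "\<exists>y2\<in>C. y2 \<noteq> y1")
    case True
    then obtain y2 where "y2 \<in> C" "y2 \<noteq> y1" by blast
    then show ?thesis using that[of y1 y2] y1 by blast
  next
    case False
    then have "C = {y1}" using y1 by blast
    then have "aff_dim C = 0" by simp
    then show ?thesis using ad by simp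
  qed
qed

lemma same_facet:
  fixes S :: "(real^2) set"
  assumes "y1 \<in> C" "y2 \<in> C" "y1 \<noteq> y2"
    and "C = S \<inter> {x. inner a x = b}" "C = S \<inter> {x. inner a' x = b'}"
    and "a \<noteq> 0" "a' \<noteq> 0" "inner a p < b" "inner a' p < b'"
  shows "\<exists>\<mu>>0. a' = \<mu> *\<^sub>R a \<and> b' = \<mu> * b"
proof -
  have "inner a y1 = b" "inner a y2 = b" using assms(1,2,4) by auto
  moreover have "inner a' y1 = b'" "inner a' y2 = b'" using assms(1,2,5) by auto
  ultimately have "inner a (y2 - y1) = 0" "inner a' (y2 - y1) = 0" by (auto simp: inner_diff_right)
  then obtain \<mu> where mu: "a' = \<mu> *\<^sub>R a" using cross_zero assms(3,6) by (metis eq_iff_diff_eq_0)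
  have bb: "b' = \<mu> * b" using assms(1,4,5) mu by auto
  have "\<mu> > 0"
  proof (rule ccontr)
    assume "\<not> \<mu> > 0"
    then have "\<mu> * b \<le> \<mu> * inner a p" using assms(8) by (simp add: mult_left_mono_neg)
    then show False using assms(9) mu bb by simp
  qed
  then show ?thesis using mu bb by blast
qed

lemma lower_bound:
  fixes X :: "(real^2) set"
  assumes P: "polyhedron P" "P \<inter> lattice2 = X" and H: "hiding_set X H"
    and p: "p \<in> interior (convex hull X)" and ad: "aff_dim X = 2"
  shows "finite H \<and> card H \<le> card {F. F facet_of P}"
proof -
  have XP: "X \<subseteq> P" using P(2) by blast
  have KP: "convex hull X \<subseteq> P" using XP polyhedron_imp_convex[OF P(1)] by (simp add: hull_minimal)
  have pP: "p \<in> interior P" using interior_mono[OF KP] p by blast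
  have "aff_dim X \<le> aff_dim P" using XP by (rule aff_dim_subset)
  moreover have "aff_dim P \<le> 2" using aff_dim_le_DIM[of P] by simp
  ultimately have adP: "aff_dim P = 2" using ad by simp
  have Hsub: "H \<subseteq> (affine hull X \<inter> lattice2) - X" and Hseg: "\<And>x y. x \<in> H \<Longrightarrow> y \<in> H \<Longrightarrow> x \<noteq> y \<Longrightarrow> closed_segment x y \<inter> convex hull X \<noteq> {}"
    using H unfolding hiding_set_def by auto
  have out: "z \<notin> P" if "z \<in> H" for z
  proof
    assume "z \<in> P"
    moreover have "z \<in> lattice2" "z \<notin> X" using Hsub that by auto
    ultimately show False using P(2) by blast
  qed
  define Q where "Q z C \<longleftrightarrow> C facet_of P \<and> (\<exists>a b. a \<noteq> 0 \<and> P \<subseteq> {x. inner a x \<le> b} \<and> C = P \<inter> {x. inner a x = b} \<and> inner a z > b)" for z C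
  have exQ: "\<exists>C. Q z C" if zH: "z \<in> H" for z
  proof -
    obtain C a b t where "C facet_of P" "a \<noteq> 0" "P \<subseteq> {x. inner a x \<le> b}" "C = P \<inter> {x. inner a x = b}" "inner a z > b"
      using exit_facet[OF P(1) pP out[OF zH]] by blast
    then show ?thesis unfolding Q_def by blast
  qed
  define phi where "phi z = (SOME C. Q z C)" for z
  have Qphi: "Q z (phi z)" if "z \<in> H" for z unfolding phi_def using exQ[OF that] by (rule someI_ex)
  have inj: "inj_on phi H"
  proof (rule inj_onI)
    fix z w assume z: "z \<in> H" and w: "w \<in> H" and eq: "phi z = phi w"
    define C where "C = phi z"
    obtain a b where ab: "C facet_of P" "a \<noteq> 0" "P \<subseteq> {x. inner a x \<le> b}" "C = P \<inter> {x. inner a x = b}" "inner a z > b"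
      using Qphi[OF z] unfolding Q_def C_def by blast
    obtain a' b' where ab': "a' \<noteq> 0" "P \<subseteq> {x. inner a' x \<le> b'}" "C = P \<inter> {x. inner a' x = b'}" "inner a' w > b'"
      using Qphi[OF w] unfolding Q_def C_def eq by blast
    obtain y1 y2 where y: "y1 \<in> C" "y2 \<in> C" "y1 \<noteq> y2" using facet_two_points[OF ab(1) adP] by blast
    have ap: "inner a p < b" by (rule interior_strict[OF pP ab(3) ab(2)])
    have ap': "inner a' p < b'" by (rule interior_strict[OF pP ab'(2) ab'(1)])
    obtain \<mu> where mu: "\<mu> > 0" "a' = \<mu> *\<^sub>R a" "b' = \<mu> * b"
      using same_facet[OF y ab(4) ab'(3) ab(2) ab'(1) ap ap'] by blast
    have "\<mu> * inner a w > \<mu> * b" using ab'(4) mu by simp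
    then have aw: "inner a w > b" using mu(1) by (simp add: mult_less_cancel_left)
    show "z = w"
    proof (rule ccontr)
      assume "z \<noteq> w"
      then obtain k where k: "k \<in> closed_segment z w" "k \<in> convex hull X" using Hseg[OF z w] by blast
      obtain u where u: "0 \<le> u" "u \<le> 1" "k = (1 - u) *\<^sub>R z + u *\<^sub>R w"
        using k(1) unfolding closed_segment_def by blast
      have "inner a k = (1 - u) * inner a z + u * inner a w" using u(3) by (simp add: inner_add_right)
      also have "\<dots> > (1 - u) * b + u * b"
      proof (cases "u = 0")
        case True then show ?thesis using ab(5) by simp
      next
        case False
        then have "u * inner a w > u * b" using u aw by (simp add: mult_strict_left_mono)
        moreover have "(1 - u) * inner a z \<ge> (1 - u) * b" using u ab(5) by (simp add: mult_left_mono)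
        ultimately show ?thesis by linarith
      qed
      finally have "inner a k > b" by (simp add: algebra_simps)
      moreover have "inner a k \<le> b" using k(2) KP ab(3) by blast
      ultimately show False by simp
    qed
  qed
  have img: "phi ` H \<subseteq> {F. F facet_of P}" using Qphi unfolding Q_def by blast
  have finF: "finite {F. F facet_of P}" using finite_polyhedron_facets[OF P(1)] .
  then have "finite (phi ` H)" using img finite_subset by blast
  then have finH: "finite H" using inj finite_imageD by blast
  have "card H = card (phi ` H)" using inj card_image by fastforce
  also have "\<dots> \<le> card {F. F facet_of P}" using img finF card_mono by blast
  finally show ?thesis using finH by simp
qed

lemma prim_normal:
  fixes n1 n2 :: int
  assumes "n1 \<noteq> 0 \<or> n2 \<noteq> 0"
  obtains c1 c2 g s t where "g \<ge> 1" "n1 = g * c2" "n2 = - (g * c1)" "s * c1 + t * c2 = 1"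
proof -
  define g where "g = gcd n1 n2"
  have "g \<noteq> 0" using assms unfolding g_def by simp
  moreover have "g \<ge> 0" unfolding g_def by simp
  ultimately have g0: "g \<ge> 1" by linarith
  have d1: "g dvd n1" "g dvd n2" unfolding g_def by auto
  define c1 where "c1 = - (n2 div g)"
  define c2 where "c2 = n1 div g"
  have e1: "n1 = g * c2" using d1 unfolding c2_def by simp
  have e2: "n2 = - (g * c1)" using d1 unfolding c1_def by simp
  have "coprime (n1 div g) (n2 div g)" unfolding g_def using div_gcd_coprime assms by blast
  then have "coprime c1 c2" unfolding c1_def c2_def by (simp add: coprime_commute)
  then have "gcd c1 c2 = 1" by simp
  then obtain s t where "s * c1 + t * c2 = 1" using bezout_int[of c1 c2] by auto
  then show ?thesis using that g0 e1 e2 by blast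
qed

lemma level_point:
  fixes L z c e :: "real^2"
  assumes L: "L \<in> lattice2" and z: "z \<in> lattice2" and c: "c \<in> lattice2" and e: "e \<in> lattice2"
    and ce: "inner c e = 1"
    and d: "d = vector [c$2, - (c$1)]"
    and H: "inner c (z - L) \<ge> 1"
  obtains w k where "w \<in> lattice2" "0 \<le> k" "k \<le> inner c (z - L) - 1"
    "w = L + (1 / inner c (z - L)) *\<^sub>R (z - L) + (k / inner c (z - L)) *\<^sub>R d"
    "inner c w = inner c L + 1"
proof -
  define H where "H = inner c (z - L)"
  define \<alpha> where "\<alpha> = e$2 * (z - L)$1 - e$1 * (z - L)$2"
  have Hint: "H \<in> \<int>" using L z c by (simp add: H_def inner2 lattice2_iff)
  have aint: "\<alpha> \<in> \<int>" using L z e by (simp add: \<alpha>_def lattice2_iff)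
  obtain Hi where Hi: "H = of_int Hi" using Hint Ints_cases by blast
  obtain ai where ai: "\<alpha> = of_int ai" using aint Ints_cases by blast
  have Hi1: "Hi \<ge> 1" using H Hi unfolding H_def by simp
  define ki where "ki = (- ai) mod Hi"
  define qi where "qi = (ai + ki) div Hi"
  have ki: "0 \<le> ki" "ki \<le> Hi - 1" using Hi1 unfolding ki_def by auto
  have "(ai + ki) mod Hi = 0" unfolding ki_def by (simp add: mod_add_right_eq)
  moreover have "qi * Hi + (ai + ki) mod Hi = ai + ki" unfolding qi_def by (rule div_mult_mod_eq)
  ultimately have qi: "ai + ki = qi * Hi" by simp
  have ce': "c$1 * e$1 + c$2 * e$2 = 1" using ce by (simp add: inner2)
  have "\<alpha> * d$1 + H * e$1 = (z - L)$1 * (c$1 * e$1 + c$2 * e$2)"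
    unfolding d \<alpha>_def H_def inner2 vector_2 by algebra
  then have dec1: "(z - L)$1 = \<alpha> * d$1 + H * e$1" using ce' by simp
  have "\<alpha> * d$2 + H * e$2 = (z - L)$2 * (c$1 * e$1 + c$2 * e$2)"
    unfolding d \<alpha>_def H_def inner2 vector_2 by algebra
  then have dec2: "(z - L)$2 = \<alpha> * d$2 + H * e$2" using ce' by simp
  define w where "w = L + e + (of_int qi) *\<^sub>R d"
  have "w \<in> lattice2" using L e c by (simp add: w_def d lattice2_iff)
  moreover have "w = L + (1 / H) *\<^sub>R (z - L) + (of_int ki / H) *\<^sub>R d"
  proof -
    have Hpos: "H > 0" using Hi Hi1 by simp
    have "of_int (ai + ki) = (of_int (qi * Hi) :: real)" using qi by simp
    then have "\<alpha> + of_int ki = of_int qi * H" using Hi ai by simp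
    then have q: "of_int qi = (\<alpha> + of_int ki) / H" using Hpos by (simp add: field_simps)
    show ?thesis unfolding vec_eq_iff forall_2 using Hpos dec1 dec2
      by (simp add: w_def q field_simps)
  qed
  moreover have "inner c w = inner c L + 1"
    using ce by (simp add: w_def d inner_add_right inner2 algebra_simps)
  ultimately show ?thesis using that[of w "of_int ki"] ki unfolding H_def[symmetric] by (simp add: Hi)
qed

lemma conv_two_distinct:
  assumes "aff_dim (convex hull T) = 1"
  obtains a1 b1 where "a1 \<in> T" "b1 \<in> T" "a1 \<noteq> b1"
proof (cases "\<exists>a1\<in>T. \<exists>b1\<in>T. a1 \<noteq> b1")
  case True then show ?thesis using that by blast
next
  case False
  then consider "T = {}" | x where "T = {x}" by blast
  then show ?thesis using assms by cases auto
qed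

lemma int_ge1: "(x::real) \<in> \<int> \<Longrightarrow> x > 0 \<Longrightarrow> x \<ge> 1"
  by (metis Ints_cases of_int_0_less_iff of_int_1_le_iff zero_less_imp_eq_int int_one_le_iff_zero_less)

lemma int_abs_ge1: "(x::real) \<in> \<int> \<Longrightarrow> x \<noteq> 0 \<Longrightarrow> \<bar>x\<bar> \<ge> 1"
  by (metis Ints_cases of_int_0_eq_iff of_int_1_le_iff of_int_abs zero_less_abs_iff int_one_le_iff_zero_less)

lemma int_norm_ge1:
  fixes c :: "real^2"
  assumes "c \<in> lattice2" "c \<noteq> 0"
  shows "norm c \<ge> 1"
proof -
  have "c$1 \<noteq> 0 \<or> c$2 \<noteq> 0" using assms(2) by (simp add: vec_eq_iff forall_2)
  moreover have "c$1 \<in> \<int>" "c$2 \<in> \<int>" using assms(1) by (auto simp: lattice2_iff)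
  ultimately have "\<bar>c$1\<bar> \<ge> 1 \<or> \<bar>c$2\<bar> \<ge> 1" using int_abs_ge1 by blast
  then show ?thesis using component_le_norm_cart[of c 1] component_le_norm_cart[of c 2] by linarith
qed

lemma domination:
  fixes X :: "(real^2) set"
  assumes fin: "finite X" and lat: "X \<subseteq> lattice2" and ad: "aff_dim X = 2" and lc: "lattice_convex X"
    and pr: "cball p \<rho> \<subseteq> convex hull X" "\<rho> > 0"
    and D: "\<forall>x\<in>X. norm (x - p) \<le> D"
    and z: "z \<in> lattice2" "z \<notin> X"
  shows "\<exists>w\<in>lattice2 - X. w \<in> convex hull (insert z X) \<and> norm (w - p) \<le> 5 * D + D / \<rho>"
proof -
  define K where "K = convex hull X"
  have polyK: "polyhedron K" unfolding K_def using fin by (intro polytope_imp_polyhedron) (auto simp: polytope_def)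
  have "ball p \<rho> \<subseteq> K" using pr(1) ball_subset_cball unfolding K_def by blast
  then have pint: "p \<in> interior K" using pr(2) mem_interior by blast
  have KX: "K \<inter> lattice2 = X" using lc unfolding lattice_convex_def K_def by simp
  have zK: "z \<notin> K" using KX z by blast
  obtain C a b t where C: "C facet_of K" and a0: "a \<noteq> 0" and Ka: "K \<subseteq> {x. inner a x \<le> b}"
    and Ceq: "C = K \<inter> {x. inner a x = b}" and t: "0 < t" "t \<le> 1" and yC: "p + t *\<^sub>R (z - p) \<in> C"
    and az: "inner a z > b" and ap: "inner a p < b"
    using exit_facet[OF polyK pint zK] by blast
  have "C face_of convex hull X" using C facet_of_imp_face_of unfolding K_def by blast
  then obtain T where TX: "T \<subseteq> X" and CT: "C = convex hull T"
    using face_of_convex_hull_subset[of X C] fin finite_imp_compact by blast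
  have adK: "aff_dim K = 2" unfolding K_def using ad by (simp add: aff_dim_convex_hull)
  have "aff_dim C = 1" using C adK unfolding facet_of_def by simp
  then obtain a1 b1 where ab1: "a1 \<in> T" "b1 \<in> T" "a1 \<noteq> b1" using conv_two_distinct CT by metis
  have a1X: "a1 \<in> X" and b1X: "b1 \<in> X" using ab1 TX by auto
  have a1C: "a1 \<in> C" and b1C: "b1 \<in> C" using ab1 CT hull_inc by auto
  have aa1: "inner a a1 = b" and ab1': "inner a b1 = b" using a1C b1C Ceq by auto
  have Dnn: "D \<ge> 0" using D a1X norm_ge_zero order_trans by blast
  have KD: "K \<subseteq> cball p D"
  proof -
    have "X \<subseteq> cball p D" using D by (auto simp: dist_norm norm_minus_commute)
    then show ?thesis unfolding K_def by (simp add: hull_minimal)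
  qed
  define v where "v = b1 - a1"
  have v0: "v \<noteq> 0" using ab1 unfolding v_def by simp
  have "a1 \<in> lattice2" "b1 \<in> lattice2" using a1X b1X lat by auto
  then have vlat: "v$1 \<in> \<int>" "v$2 \<in> \<int>" unfolding v_def by (auto simp: lattice2_iff intro!: Ints_diff)
  obtain n1 where n1: "v$1 = of_int n1" using vlat(1) Ints_cases by blast
  obtain n2 where n2: "v$2 = of_int n2" using vlat(2) Ints_cases by blast
  have "n1 \<noteq> 0 \<or> n2 \<noteq> 0" using v0 n1 n2 by (auto simp: vec_eq_iff forall_2)
  then obtain c1 c2 g s u where g: "g \<ge> 1" and gn1: "n1 = g * c2" and gn2: "n2 = - (g * c1)"
    and bez: "s * c1 + u * c2 = 1"
    using prim_normal by metis
  define cv :: "real^2" where "cv = vector [of_int c1, of_int c2]"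
  have cv0: "cv \<noteq> 0"
  proof
    assume "cv = 0"
    then have "c1 = 0" "c2 = 0" unfolding cv_def by (auto simp: vec_eq_iff forall_2)
    then show False using bez by simp
  qed
  have "inner cv v = of_int (c1 * n1 + c2 * n2)" unfolding cv_def by (simp add: inner2 n1 n2)
  also have "\<dots> = 0" using gn1 gn2 by (simp add: algebra_simps)
  finally have cvv: "inner cv v = 0" .
  have av: "inner a v = 0" using aa1 ab1' unfolding v_def by (simp add: inner_diff_right)
  obtain lm where lam: "a = lm *\<^sub>R cv" using cross_zero[OF cvv av v0 cv0] by blast
  have lam0: "lm \<noteq> 0" using lam a0 by auto
  define \<sigma> :: int where "\<sigma> = (if lm > 0 then 1 else -1)"
  have sig2: "\<sigma> * \<sigma> = 1" unfolding \<sigma>_def by simp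
  have sigc: "\<sigma> = 1 \<or> \<sigma> = -1" unfolding \<sigma>_def by simp
  define cR :: "real^2" where "cR = vector [of_int (\<sigma> * c1), of_int (\<sigma> * c2)]"
  define l where "l = \<bar>lm\<bar>"
  have l0: "l > 0" using lam0 unfolding l_def by simp
  have cRcv: "cR = of_int \<sigma> *\<^sub>R cv" unfolding cR_def cv_def by (simp add: vec_eq_iff forall_2)
  have lsig: "l * of_int \<sigma> = lm" unfolding l_def \<sigma>_def by simp
  have acR: "a = l *\<^sub>R cR" unfolding cRcv lam scaleR_scaleR lsig ..
  have cRlat: "cR \<in> lattice2" unfolding cR_def by (simp add: lattice2_iff)
  define e :: "real^2" where "e = vector [of_int (\<sigma> * s), of_int (\<sigma> * u)]"
  have elat: "e \<in> lattice2" unfolding e_def by (simp add: lattice2_iff)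
  have "inner cR e = of_int (s * c1 + u * c2)"
    using sigc unfolding cR_def e_def by (auto simp: inner2 algebra_simps)
  then have ce: "inner cR e = 1" using bez by simp
  define d :: "real^2" where "d = vector [cR$2, - (cR$1)]"
  have vd: "v = (of_int (\<sigma> * g)) *\<^sub>R d"
  proof -
    have "v$1 = of_int (\<sigma> * g) * d$1" using n1 gn1 sigc unfolding d_def cR_def by auto
    moreover have "v$2 = of_int (\<sigma> * g) * d$2" using n2 gn2 sigc unfolding d_def cR_def by auto
    ultimately show ?thesis by (simp add: vec_eq_iff forall_2)
  qed
  define L where "L = (if \<sigma> = 1 then a1 else b1)"
  have LX: "L \<in> X" unfolding L_def using a1X b1X by simp
  have L'X: "L + of_int g *\<^sub>R d \<in> X"
  proof (cases "\<sigma> = 1")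
    case True
    then have "L + of_int g *\<^sub>R d = b1" using vd unfolding L_def v_def by (simp add: algebra_simps)
    then show ?thesis using b1X by simp
  next
    case False
    then have "\<sigma> = -1" unfolding \<sigma>_def by (auto split: if_splits)
    then have "L + of_int g *\<^sub>R d = a1" using vd unfolding L_def v_def by (simp add: algebra_simps)
    then show ?thesis using a1X by simp
  qed
  have aL: "inner a L = b" unfolding L_def using aa1 ab1' by simp
  define \<beta> where "\<beta> = inner cR L"
  have lb: "b = l * \<beta>" using aL acR unfolding \<beta>_def by simp
  have Kc: "inner cR x \<le> \<beta>" if "x \<in> K" for x
  proof -
    have "l * inner cR x \<le> l * \<beta>" using Ka that acR lb by auto
    then show ?thesis using l0 by simp
  qed
  have cz: "inner cR z > \<beta>"
  proof -
    have "l * inner cR z > l * \<beta>" using az acR lb by auto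
    then show ?thesis using l0 by simp
  qed
  have Llat: "L \<in> lattice2" using LX lat by blast
  define H where "H = inner cR (z - L)"
  have HZ: "H \<in> \<int>" using Llat z(1) cRlat unfolding H_def by (auto simp: inner2 lattice2_iff intro!: Ints_diff Ints_add Ints_mult)
  have H1: "H \<ge> 1" using int_ge1[OF HZ] cz unfolding H_def \<beta>_def by (simp add: inner_diff_right)
  obtain w k where w: "w \<in> lattice2" "0 \<le> k" "k \<le> H - 1"
      "w = L + (1 / H) *\<^sub>R (z - L) + (k / H) *\<^sub>R d" "inner cR w = inner cR L + 1"
    using level_point[OF Llat z(1) cRlat elat ce d_def] H1 unfolding H_def by blast
  have wX: "w \<notin> X"
  proof
    assume "w \<in> X"
    then have "w \<in> K" unfolding K_def by (simp add: hull_inc)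
    then show False using Kc w(5) unfolding \<beta>_def by fastforce
  qed
  have Hpos: "H > 0" using H1 by simp
  have gpos: "real_of_int g \<ge> 1" using g by simp
  have wconv: "w \<in> convex hull {z, L, L + of_int g *\<^sub>R d}"
  proof -
    define u1 where "u1 = 1 / H"
    define u3 where "u3 = k / (H * of_int g)"
    define u2 where "u2 = 1 - u1 - u3"
    have "u3 \<le> k / H" unfolding u3_def using gpos Hpos w(2)
      by (simp add: divide_left_mono)
    also have "\<dots> \<le> (H - 1) / H" using w(3) Hpos by (simp add: divide_right_mono)
    finally have "u3 \<le> 1 - u1" unfolding u1_def using Hpos by (simp add: diff_divide_distrib)
    then have u2: "u2 \<ge> 0" unfolding u2_def by simp
    have u1: "u1 \<ge> 0" "u3 \<ge> 0" unfolding u1_def u3_def using Hpos w(2) gpos by auto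
    have "w = u1 *\<^sub>R z + u2 *\<^sub>R L + u3 *\<^sub>R (L + of_int g *\<^sub>R d)"
    proof -
      have "u3 * of_int g = k / H" unfolding u3_def using gpos by simp
      then show ?thesis unfolding w(4) u2_def u1_def
        by (simp add: algebra_simps scaleR_diff_left)
    qed
    then show ?thesis unfolding convex_hull_3 using u1 u2 unfolding u2_def by fastforce
  qed
  then have wconv': "w \<in> convex hull (insert z X)"
    using hull_mono[of "{z, L, L + of_int g *\<^sub>R d}" "insert z X"] LX L'X by blast
  have bound: "norm (w - p) \<le> 5 * D + D / \<rho>"
  proof -
    define y where "y = p + t *\<^sub>R (z - p)"
    have yK: "y \<in> K" using yC Ceq unfolding y_def by blast
    have "inner a y = b" using yC Ceq unfolding y_def by blast
    then have "l * inner cR y = l * \<beta>" using acR lb by simp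
    then have cy: "inner cR y = \<beta>" using l0 by simp
    define \<delta> where "\<delta> = \<beta> - inner cR p"
    have cR0: "cR \<noteq> 0" using acR a0 by auto
    have cRn: "norm cR \<ge> 1" using int_norm_ge1[OF cRlat cR0] .
    define q where "q = p + (\<rho> / norm cR) *\<^sub>R cR"
    have "dist p q = \<rho>" unfolding q_def using cR0 pr(2) by (simp add: dist_norm)
    then have "q \<in> K" using pr(1) unfolding K_def by auto
    then have "inner cR q \<le> \<beta>" using Kc by blast
    moreover have "inner cR q = inner cR p + \<rho> * norm cR"
      unfolding q_def using cR0 by (simp add: inner_add_right power2_norm_eq_inner[symmetric] power2_eq_square)
    ultimately have "\<delta> \<ge> \<rho> * norm cR" unfolding \<delta>_def by simp
    moreover have "\<rho> * norm cR \<ge> \<rho>" using cRn pr(2) by simp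
    ultimately have dr: "\<delta> \<ge> \<rho>" by simp
    have dpos: "\<delta> > 0" using dr pr(2) by simp
    have "inner cR (y - p) = t * inner cR (z - p)" unfolding y_def by (simp add: inner_diff_right)
    moreover have "inner cR (y - p) = \<delta>" using cy unfolding \<delta>_def by (simp add: inner_diff_right)
    moreover have "inner cR (z - p) = H + \<delta>" unfolding H_def \<delta>_def \<beta>_def by (simp add: inner_diff_right)
    ultimately have ty: "t * (H + \<delta>) = \<delta>" by simp
    have "y \<in> cball p D" using yK KD by blast
    then have "norm (y - p) \<le> D" by (simp add: dist_norm norm_minus_commute)
    moreover have "norm (y - p) = t * norm (z - p)" unfolding y_def using t by simp
    ultimately have tz: "t * norm (z - p) \<le> D" by simp
    have nzp: "norm (z - p) \<le> D * (H + \<delta>) / \<delta>"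
    proof -
      have "(H + \<delta>) * (t * norm (z - p)) \<le> (H + \<delta>) * D" using tz Hpos dpos by (simp add: mult_left_mono)
      moreover have "(H + \<delta>) * (t * norm (z - p)) = (t * (H + \<delta>)) * norm (z - p)" by (simp only: ac_simps)
      ultimately have "\<delta> * norm (z - p) \<le> (H + \<delta>) * D" unfolding ty by simp
      then show ?thesis using dpos by (simp add: field_simps)
    qed
    have nLp: "norm (L - p) \<le> D" using D LX by blast
    have ndd: "norm d \<le> 2 * D"
    proof -
      have "norm v = \<bar>of_int (\<sigma> * g)\<bar> * norm d" using vd by simp
      also have "\<dots> = of_int g * norm d" using sigc g by auto
      finally have "norm d \<le> norm v" using gpos by (simp add: mult_le_cancel_right1)
      moreover have "norm v \<le> norm (b1 - p) + norm (a1 - p)" unfolding v_def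
        using norm_triangle_ineq4[of "b1 - p" "a1 - p"] by simp
      moreover have "norm (b1 - p) \<le> D" "norm (a1 - p) \<le> D" using D a1X b1X by auto
      ultimately show ?thesis by linarith
    qed
    have wp: "w - p = (L - p) + (1 / H) *\<^sub>R (z - L) + (k / H) *\<^sub>R d" using w(4) by (simp add: algebra_simps)
    have "norm (w - p) \<le> norm (L - p) + norm ((1 / H) *\<^sub>R (z - L)) + norm ((k / H) *\<^sub>R d)"
      unfolding wp by (meson norm_triangle_le norm_triangle_ineq add_mono order_refl)
    also have "\<dots> = norm (L - p) + (1 / H) * norm (z - L) + (k / H) * norm d"
      using Hpos w(2) by simp
    also have "\<dots> \<le> D + (1 / H) * (D * (H + \<delta>) / \<delta> + D) + 1 * (2 * D)"
    proof -
      have "norm (z - L) \<le> norm (z - p) + norm (L - p)"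
        using norm_triangle_ineq4[of "z - p" "L - p"] by simp
      then have "norm (z - L) \<le> D * (H + \<delta>) / \<delta> + D" using nzp nLp by simp
      then have A: "(1 / H) * norm (z - L) \<le> (1 / H) * (D * (H + \<delta>) / \<delta> + D)"
        using Hpos by (intro mult_left_mono) auto
      have "k / H \<le> 1" using w(3) Hpos by simp
      then have B: "(k / H) * norm d \<le> 1 * (2 * D)"
        using ndd w(2) Hpos by (meson divide_nonneg_pos mult_mono norm_ge_zero zero_le_one)
      show ?thesis using A B nLp by linarith
    qed
    also have "\<dots> = D + D / \<delta> + D / H + D / H + 2 * D" using Hpos dpos by (simp add: field_simps)
    also have "\<dots> \<le> D + D / \<rho> + D + D + 2 * D"
    proof -
      have "D / \<delta> \<le> D / \<rho>" using dr pr(2) Dnn by (simp add: divide_left_mono)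
      moreover have "D / H \<le> D" using H1 Dnn by (simp add: divide_le_eq mult_le_cancel_left1 order_trans)
      ultimately show ?thesis by linarith
    qed
    finally show ?thesis by simp
  qed
  show ?thesis using w(1) wX wconv' bound by blast
qed

lemma facets_le:
  fixes P :: "'a::euclidean_space set"
  assumes "finite G" "\<forall>h\<in>G. \<exists>a b. a \<noteq> 0 \<and> h = {x. inner a x \<le> b}" "P = affine hull P \<inter> \<Inter>G"
  shows "card {F. F facet_of P} \<le> card G"
  using assms
proof (induction "card G" arbitrary: G rule: less_induct)
  case less
  show ?case
  proof (cases "\<exists>G'. G' \<subset> G \<and> \<not> (P \<subset> affine hull P \<inter> \<Inter>G')")
    case True
    then obtain G' where G': "G' \<subset> G" "\<not> (P \<subset> affine hull P \<inter> \<Inter>G')" by blast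
    have PG: "P \<subseteq> affine hull P \<inter> \<Inter>G" using less.prems(3) by (rule equalityD1)
    have "\<Inter>G \<subseteq> \<Inter>G'" using G'(1) by blast
    then have "P \<subseteq> affine hull P \<inter> \<Inter>G'" using PG by blast
    then have eq: "P = affine hull P \<inter> \<Inter>G'" using G'(2) by (simp add: psubset_eq)
    have c: "card G' < card G" using G'(1) less.prems(1) by (rule psubset_card_mono[rotated])
    have f: "finite G'" by (rule finite_subset[OF psubset_imp_subset[OF G'(1)] less.prems(1)])
    have h: "\<forall>h\<in>G'. \<exists>a b. a \<noteq> 0 \<and> h = {x. inner a x \<le> b}" using G'(1) less.prems(2) by blast
    have "card {F. F facet_of P} \<le> card G'" using less.hyps[OF c f h eq] .
    then show ?thesis using c by simp
  next
    case False
    then have psub: "\<And>G'. G' \<subset> G \<Longrightarrow> P \<subset> affine hull P \<inter> \<Inter>G'" by auto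
    have "\<forall>h\<in>G. \<exists>ab. fst ab \<noteq> 0 \<and> h = {x. inner (fst ab) x \<le> snd ab}"
    proof
      fix h assume "h \<in> G"
      then obtain a b where "a \<noteq> 0" "h = {x. inner a x \<le> b}" using less.prems(2) by blast
      then show "\<exists>ab. fst ab \<noteq> 0 \<and> h = {x. inner (fst ab) x \<le> snd ab}" by (intro exI[of _ "(a, b)"]) simp
    qed
    then obtain f where f: "\<forall>h\<in>G. fst (f h) \<noteq> 0 \<and> h = {x. inner (fst (f h)) x \<le> snd (f h)}"
      by (rule exE[OF bchoice])
    define a where "a h = fst (f h)" for h
    define b where "b h = snd (f h)" for h
    have faceq: "\<And>h. h \<in> G \<Longrightarrow> a h \<noteq> 0 \<and> h = {x. inner (a h) x \<le> b h}" unfolding a_def b_def by (rule bspec[OF f])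
    have "{F. F facet_of P} = (\<lambda>h. P \<inter> {x. inner (a h) x = b h}) ` G"
    proof (rule set_eqI)
      fix C
      show "C \<in> {F. F facet_of P} \<longleftrightarrow> C \<in> (\<lambda>h. P \<inter> {x. inner (a h) x = b h}) ` G"
        by (simp only: mem_Collect_eq facet_of_polyhedron_explicit[OF less.prems(1) less.prems(3) faceq psub] image_iff Bex_def)
    qed
    then show ?thesis using card_image_le[OF less.prems(1)] by (simp only:)
  qed
qed

lemma finite_lattice_ball: "finite {w \<in> lattice2. norm (w - p) \<le> R}"
proof -
  define N where "N = \<lceil>norm p + R\<rceil>"
  have "{w \<in> lattice2. norm (w - p) \<le> R} \<subseteq> (\<lambda>(i,j). vector [of_int i, of_int j] :: real^2) ` ({-N..N} \<times> {-N..N})"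
  proof
    fix w assume w: "w \<in> {w \<in> lattice2. norm (w - p) \<le> R}"
    have "norm w \<le> norm p + R" using w norm_triangle_sub[of w p] by auto
    then have nw: "norm w \<le> N" unfolding N_def by linarith
    obtain i where i: "w$1 = of_int i" using w by (auto simp: lattice2_iff elim: Ints_cases)
    obtain j where j: "w$2 = of_int j" using w by (auto simp: lattice2_iff elim: Ints_cases)
    have "\<bar>of_int i\<bar> \<le> (of_int N :: real)" using component_le_norm_cart[of w 1] nw i by simp
    then have "\<bar>i\<bar> \<le> N" by (simp only: of_int_abs[symmetric] of_int_le_iff)
    then have ii: "i \<in> {-N..N}" by (auto simp: abs_le_iff)
    have "\<bar>of_int j\<bar> \<le> (of_int N :: real)" using component_le_norm_cart[of w 2] nw j by simp
    then have "\<bar>j\<bar> \<le> N" by (simp only: of_int_abs[symmetric] of_int_le_iff)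
    then have jj: "j \<in> {-N..N}" by (auto simp: abs_le_iff)
    have "w = vector [of_int i, of_int j]" using i j by (simp add: vec_eq_iff forall_2)
    then show "w \<in> (\<lambda>(i,j). vector [of_int i, of_int j] :: real^2) ` ({-N..N} \<times> {-N..N})"
      using ii jj by force
  qed
  then show ?thesis by (rule finite_subset) auto
qed

lemma sep_dir:
  fixes S T :: "(real^2) set"
  assumes "convex S" "closed S" "S \<noteq> {}" "convex T" "compact T" "T \<noteq> {}" "S \<inter> T = {}"
  obtains t where "0 \<le> t" "t < 2*pi" "\<And>x y. x \<in> S \<Longrightarrow> y \<in> T \<Longrightarrow> fd t (y - x) > 0"
proof -
  obtain a b where ab: "\<forall>x\<in>S. inner a x < b" "\<forall>y\<in>T. inner a y > b"
    using separating_hyperplane_closed_compact[OF assms(1,2,4,5,6,7)] by blast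
  have a0: "a \<noteq> 0"
  proof
    assume "a = 0"
    moreover obtain x where "x \<in> S" using assms(3) by blast
    moreover obtain y where "y \<in> T" using assms(6) by blast
    ultimately show False using ab by force
  qed
  obtain t where t: "0 \<le> t" "t < 2*pi" "\<And>v. fd t v = inner a v / norm a" using dir_exists[OF a0] by blast
  show ?thesis
  proof (rule that[OF t(1,2)])
    fix x y assume "x \<in> S" "y \<in> T"
    then have "inner a x < b" "inner a y > b" using ab by auto
    then have "inner a (y - x) > 0" by (simp add: inner_diff_right)
    then show "fd t (y - x) > 0" using t(3) a0 by simp
  qed
qed

lemma dvec_fd: "inner (vector [cos t, sin t] :: real^2) x = fd t x"
  by (simp add: inner2 fd_def)

lemma dvec_nz: "(vector [cos t, sin t] :: real^2) \<noteq> 0"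
proof
  assume "(vector [cos t, sin t] :: real^2) = 0"
  then have "cos t = 0" "sin t = 0" by (auto simp: vec_eq_iff forall_2)
  then show False using sin_cos_squared_add[of t] by simp
qed

theorem theorem4p6:
  fixes X :: "(real^2) set"
  assumes "finite X" and "X \<subseteq> lattice2" and "aff_dim X = 2" and "lattice_convex X"
  shows "hiding_number X \<le> enat (rc X) \<and> enat (rc X) \<le> hiding_number X + 1"
proof -
  note fin = assms(1) and lat = assms(2) and ad = assms(3) and lc = assms(4)
  define K where "K = convex hull X"
  have Xne: "X \<noteq> {}" using ad by auto
  have KX: "K \<inter> lattice2 = X" using lc unfolding lattice_convex_def K_def by simp
  have polyK: "polyhedron K" unfolding K_def using fin by (intro polytope_imp_polyhedron) (auto simp: polytope_def)
  have convK: "convex K" "closed K" "K \<noteq> {}" unfolding K_def using fin Xne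
    by (auto simp: finite_imp_compact_convex_hull compact_imp_closed)
  have adK: "aff_dim K = 2" unfolding K_def using ad by (simp add: aff_dim_convex_hull)
  have "interior K = rel_interior K" using adK interior_rel_interior_gen[of K] by simp
  moreover have "rel_interior K \<noteq> {}" using convK rel_interior_eq_empty by blast
  ultimately obtain p where p: "p \<in> interior K" by auto
  then obtain \<rho> where rho: "\<rho> > 0" "cball p \<rho> \<subseteq> K" using mem_interior_cball by blast
  define D where "D = Max ((\<lambda>x. norm (x - p)) ` X)"
  have Dx: "\<forall>x\<in>X. norm (x - p) \<le> D" unfolding D_def using fin by auto
  define R where "R = 5 * D + D / \<rho>"
  have exP: "\<exists>k P. polyhedron P \<and> P \<inter> lattice2 = X \<and> card {F. F facet_of P} = k"
    using polyK KX by blast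
  have "\<exists>P. polyhedron P \<and> P \<inter> lattice2 = X \<and> card {F. F facet_of P} = rc X"
    unfolding rc_def by (rule LeastI_ex) (use exP in blast)
  then obtain P0 where P0: "polyhedron P0" "P0 \<inter> lattice2 = X" "card {F. F facet_of P0} = rc X" by blast
  have rc_le: "rc X \<le> card {F. F facet_of P}" if "polyhedron P" "P \<inter> lattice2 = X" for P
    unfolding rc_def by (rule Least_le) (use that in blast)
  have part1: "hiding_number X \<le> enat (rc X)"
    unfolding hiding_number_def
  proof (rule SUP_least)
    fix H assume "H \<in> {H. hiding_set X H}"
    then have "finite H \<and> card H \<le> card {F. F facet_of P0}"
      using lower_bound[OF P0(1,2) _ _ ad, of H p] p unfolding K_def by blast
    then show "(if finite H then enat (card H) else \<infinity>) \<le> enat (rc X)" using P0(3) by simp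
  qed
  define Z0 where "Z0 = {w \<in> lattice2. norm (w - p) \<le> R} - X"
  have finZ0: "finite Z0" unfolding Z0_def using finite_lattice_ball[of p R] by simp
  define FF where "FF = (\<lambda>w. Sz X w) ` {w \<in> Z0. \<not> GG X w 0}"
  have finFF: "finite FF" unfolding FF_def using finZ0 by simp
  have Sz_ne: "Sz X w \<noteq> {}" if "w \<in> lattice2" "w \<notin> X" "\<not> GG X w 0" for w
  proof -
    have "w \<notin> K" using KX that by blast
    then have "K \<inter> {w} = {}" by blast
    then obtain t where t: "0 \<le> t" "t < 2*pi" "\<And>x y. x \<in> K \<Longrightarrow> y \<in> {w} \<Longrightarrow> fd t (y - x) > 0"
      using sep_dir[OF convK(1,2,3) convex_singleton compact_sing insert_not_empty \<open>K \<inter> {w} = {}\<close>] by blast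
    have "GG X w t" unfolding GG_def
    proof
      fix x assume "x \<in> X"
      then have "x \<in> K" unfolding K_def by (rule hull_inc)
      then show "0 < fd t (w - x)" using t(3)[of x w] by simp
    qed
    then have "t \<noteq> 0" using that(3) by auto
    then have "t \<in> Sz X w" using t \<open>GG X w t\<close> unfolding Sz_def by simp
    then show ?thesis by blast
  qed
  have FFprop: "\<forall>S\<in>FF. open S \<and> is_interval S \<and> bounded S \<and> S \<noteq> {}"
  proof
    fix S assume "S \<in> FF"
    then obtain w where w: "w \<in> Z0" "\<not> GG X w 0" "S = Sz X w" unfolding FF_def by blast
    have "w \<in> lattice2" "w \<notin> X" using w(1) unfolding Z0_def by auto
    then show "open S \<and> is_interval S \<and> bounded S \<and> S \<noteq> {}"
      using w Sz_open[OF fin] Sz_interval[OF Xne] Sz_bounded Sz_ne by simp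
  qed
  obtain Th DD where G: "finite Th" "DD \<subseteq> FF" "\<forall>A\<in>DD. \<forall>B\<in>DD. A \<noteq> B \<longrightarrow> A \<inter> B = {}"
    "card Th \<le> card DD" "\<forall>S\<in>FF. S \<inter> Th \<noteq> {}"
    using greedy[OF finFF FFprop] by blast
  define rep where "rep S = (SOME w. w \<in> Z0 \<and> \<not> GG X w 0 \<and> Sz X w = S)" for S
  have rep: "rep S \<in> Z0 \<and> \<not> GG X (rep S) 0 \<and> Sz X (rep S) = S" if "S \<in> FF" for S
  proof -
    have "\<exists>w. w \<in> Z0 \<and> \<not> GG X w 0 \<and> Sz X w = S" using that unfolding FF_def by blast
    then show ?thesis unfolding rep_def by (rule someI_ex)
  qed
  define Hs where "Hs = rep ` DD"
  have injrep: "inj_on rep DD"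
  proof (rule inj_onI)
    fix S S' assume a1: "S \<in> DD" and a2: "S' \<in> DD" and a3: "rep S = rep S'"
    have r1: "S \<in> FF" by (rule subsetD[OF G(2) a1])
    have r2: "S' \<in> FF" by (rule subsetD[OF G(2) a2])
    have e1: "Sz X (rep S) = S" by (rule conjunct2[OF conjunct2[OF rep[OF r1]]])
    have e2: "Sz X (rep S') = S'" by (rule conjunct2[OF conjunct2[OF rep[OF r2]]])
    have "S = Sz X (rep S)" using e1 by (rule sym)
    also have "\<dots> = Sz X (rep S')" using a3 by (rule arg_cong)
    also have "\<dots> = S'" by (rule e2)
    finally show "S = S'" .
  qed
  have finDD: "finite DD" using G(2) finFF by (rule finite_subset)
  have cardHs: "card Hs = card DD" unfolding Hs_def using injrep by (simp add: card_image)
  have hs: "hiding_set X Hs"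
    unfolding hiding_set_def
  proof (intro conjI ballI impI)
    have "affine hull X = UNIV" using ad aff_dim_eq_full[of X] by simp
    show "Hs \<subseteq> affine hull X \<inter> lattice2 - X"
    proof
      fix z assume "z \<in> Hs"
      then obtain S where S: "S \<in> DD" "z = rep S" unfolding Hs_def by blast
      have "S \<in> FF" by (rule subsetD[OF G(2) S(1)])
      then have "rep S \<in> Z0" by (rule conjunct1[OF rep])
      then show "z \<in> affine hull X \<inter> lattice2 - X" using S(2) \<open>affine hull X = UNIV\<close> unfolding Z0_def by blast
    qed
  next
    fix z w assume z: "z \<in> Hs" and w: "w \<in> Hs" and zw: "z \<noteq> w"
    obtain S where S: "S \<in> DD" "z = rep S" using z unfolding Hs_def by blast
    obtain S' where S': "S' \<in> DD" "w = rep S'" using w unfolding Hs_def by blast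
    have SS': "S \<noteq> S'" using S S' zw by blast
    then have disj: "S \<inter> S' = {}" using G(3) S S' by blast
    have SF: "S \<in> FF" by (rule subsetD[OF G(2) S(1)])
    have SF': "S' \<in> FF" by (rule subsetD[OF G(2) S'(1)])
    have rz: "\<not> GG X z 0" "Sz X z = S" unfolding S(2) using rep[OF SF] by (rule conjunct1[OF conjunct2], rule conjunct2[OF conjunct2])
    have rw: "Sz X w = S'" unfolding S'(2) by (rule conjunct2[OF conjunct2[OF rep[OF SF']]])
    show "closed_segment z w \<inter> convex hull X \<noteq> {}"
    proof
      assume "closed_segment z w \<inter> convex hull X = {}"
      then have "K \<inter> closed_segment z w = {}" unfolding K_def by blast
      have segne: "closed_segment z w \<noteq> {}" by auto
      then obtain t where t: "0 \<le> t" "t < 2*pi" "\<And>x y. x \<in> K \<Longrightarrow> y \<in> closed_segment z w \<Longrightarrow> fd t (y - x) > 0"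
        using sep_dir[OF convK(1,2,3) convex_closed_segment compact_segment segne \<open>K \<inter> closed_segment z w = {}\<close>] by blast
      have zs: "z \<in> closed_segment z w" "w \<in> closed_segment z w" by auto
      have XK: "x \<in> K" if "x \<in> X" for x unfolding K_def using that by (rule hull_inc)
      have "GG X z t" "GG X w t" unfolding GG_def using t(3) XK zs by blast+
      moreover have "t \<noteq> 0" using rz(1) \<open>GG X z t\<close> by auto
      ultimately have "t \<in> Sz X z" "t \<in> Sz X w" using t unfolding Sz_def by auto
      then have "t \<in> S" "t \<in> S'" using rz rw by auto
      then show False using disj by blast
    qed
  qed
  have finHs: "finite Hs" unfolding Hs_def using finDD by simp
  have Hs_le: "enat (card Hs) \<le> hiding_number X"
  proof -
    have "(if finite Hs then enat (card Hs) else \<infinity>) \<le> hiding_number X"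
      unfolding hiding_number_def by (rule SUP_upper) (use hs in simp)
    then show ?thesis using finHs by simp
  qed
  define U where "U = insert 0 Th"
  define hp where "hp t = {x. inner (vector [cos t, sin t] :: real^2) x \<le> Max ((\<lambda>x. fd t x) ` X)}" for t
  define P where "P = \<Inter> (hp ` U)"
  have finU: "finite U" unfolding U_def using G(1) by simp
  have polyP: "polyhedron P"
    unfolding polyhedron_def P_def
    by (rule exI[of _ "hp ` U"]) (use finU dvec_nz in \<open>auto simp: hp_def\<close>)
  have Xhp: "X \<subseteq> hp t" for t
    unfolding hp_def dvec_fd using fin by auto
  have PX: "P \<inter> lattice2 = X"
  proof
    show "X \<subseteq> P \<inter> lattice2" using Xhp lat unfolding P_def by blast
  next
    show "P \<inter> lattice2 \<subseteq> X"
    proof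
      fix y assume y: "y \<in> P \<inter> lattice2"
      show "y \<in> X"
      proof (rule ccontr)
        assume yX: "y \<notin> X"
        obtain w where w: "w \<in> lattice2 - X" "w \<in> convex hull (insert y X)" "norm (w - p) \<le> R"
          using domination[OF fin lat ad lc rho(2)[unfolded K_def] rho(1) Dx] y yX unfolding R_def by blast
        have wZ: "w \<in> Z0" using w unfolding Z0_def by blast
        obtain t where tU: "t \<in> U" and Gt: "GG X w t"
        proof (cases "GG X w 0")
          case True then show ?thesis using that unfolding U_def by blast
        next
          case False
          then have "Sz X w \<in> FF" unfolding FF_def using wZ by blast
          then obtain t where "t \<in> Sz X w" "t \<in> Th" using G(5) by blast
          then show ?thesis using that unfolding U_def Sz_def by blast
        qed
        have "y \<in> hp t" using y tU unfolding P_def by blast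
        then have "insert y X \<subseteq> hp t" using Xhp by blast
        moreover have "convex (hp t)" unfolding hp_def by (rule convex_halfspace_le)
        ultimately have "convex hull (insert y X) \<subseteq> hp t" by (rule hull_minimal)
        then have "fd t w \<le> Max ((\<lambda>x. fd t x) ` X)" using w(2) unfolding hp_def dvec_fd by blast
        moreover have "Max ((\<lambda>x. fd t x) ` X) \<in> (\<lambda>x. fd t x) ` X" using fin Xne by simp
        then obtain x where "x \<in> X" "Max ((\<lambda>x. fd t x) ` X) = fd t x" by auto
        moreover have "fd t (w - x) > 0" using Gt \<open>x \<in> X\<close> unfolding GG_def by blast
        ultimately show False by (simp add: fd_linear)
      qed
    qed
  qed
  have "P \<subseteq> affine hull P" by (rule hull_subset)
  then have Paff: "P = affine hull P \<inter> \<Inter> (hp ` U)" unfolding P_def by blast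
  have "card {F. F facet_of P} \<le> card (hp ` U)"
    by (rule facets_le[OF _ _ Paff]) (use finU dvec_nz in \<open>auto simp: hp_def\<close>)
  also have "\<dots> \<le> card U" using finU by (rule card_image_le)
  also have "\<dots> \<le> card Th + 1" unfolding U_def using G(1) by (simp add: card_insert_if)
  also have "\<dots> \<le> card Hs + 1" using G(4) cardHs by simp
  finally have "rc X \<le> card Hs + 1" using rc_le[OF polyP PX] by simp
  then have "enat (rc X) \<le> enat (card Hs) + 1" by (simp add: one_enat_def)
  also have "\<dots> \<le> hiding_number X + 1" using Hs_le by (rule add_right_mono)
  finally show ?thesis using part1 by simp
qed

end
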